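(* Suppose the loss $f\colon\Theta\to\mathbb{R}$ is convex. Then for the core Two-Tailed Averaging algorithm run on any sequence of iterates $(\theta_t)$, the sequence $(F_N)$ of losses of the short averages at switch points is monotonically non-increasing: $F_{N+1}\le F_N$ for every $N\in\mathbb{N}$ for which the $(N+1)$-th switch point exists.
   Context: Let $\Theta=\mathbb{R}^d$, let $(\theta_t)_{t\in\mathbb{N}_0}$ be a sequence in $\Theta$, let $f\colon\Theta\to\mathbb{R}$ be a loss function, and let $E\in\mathbb{N}$ be the evaluation period. For integers $t\ge \Delta\ge 1$ write $\mathrm{avg}(t,\Delta)=\frac{1}{\Delta}\sum_{i=t+1-\Delta}^{t}\theta_i$. Core Two-Tailed Averaging: it maintains integers $S,L$ and vectors $\theta^S,\theta^L$, initially $S=L=0$, $\theta^S=\theta^L=0$. For $t=1,2,\dots$: first $\theta_t$ is added to both averages, i.e. $\theta^S\leftarrow\theta^S+(\theta_t-\theta^S)/(S+1)$, $S\leftarrow S+1$, and $\theta^L\leftarrow\theta^L+(\theta_t-\theta^L)/(L+1)$, $L\leftarrow L+1$ (so $\theta^S=\mathrm{avg}(t,S)$, $\theta^L=\mathrm{avg}(t,L)$). Then, if $E$ divides $t$: if $f(\theta^S)\le f(\theta^L)$, a switch is performed: $L\leftarrow S$, $\theta^L\leftarrow\theta^S$, $S\leftarrow 0$. $S'(t),\theta^{S'}(t)$ denote the values of $S,\theta^S$ in the $t$-th pass after $\theta_t$ has been added but before the possible switch. A time step $n$ is a switch point if a switch is performed at $t=n$. For $N\in\mathbb{N}$: $Q_N$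 is the $N$-th switch point (in increasing order), $F_N=f(\theta^{S'}(Q_N))$, and $S_N=S'(Q_N)$. *)

theory Defs
  imports "HOL-Analysis.Analysis"
begin

text \<open>State of core Two-Tailed Averaging: (S, L, theta^S, theta^L).\<close>
type_synonym 'v tta_state = "nat \<times> nat \<times> 'v \<times> 'v"

fun tta_add :: "'v::real_vector \<Rightarrow> 'v tta_state \<Rightarrow> 'v tta_state" where
  "tta_add x (S, L, aS, aL) =
     (S + 1, L + 1, aS + (x - aS) /\<^sub>R real (S + 1), aL + (x - aL) /\<^sub>R real (L + 1))"

fun tta_state :: "('v::real_vector \<Rightarrow> real) \<Rightarrow> nat \<Rightarrow> (nat \<Rightarrow> 'v) \<Rightarrow> nat \<Rightarrow> 'v tta_state" where
  "tta_state f E th 0 = (0, 0, 0, 0)"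
| "tta_state f E th (Suc t) =
     (case tta_add (th (Suc t)) (tta_state f E th t) of (S, L, aS, aL) \<Rightarrow>
        if E dvd Suc t \<and> f aS \<le> f aL then (0, S, aS, aS) else (S, L, aS, aL))"

definition tta_pre :: "('v::real_vector \<Rightarrow> real) \<Rightarrow> nat \<Rightarrow> (nat \<Rightarrow> 'v) \<Rightarrow> nat \<Rightarrow> 'v tta_state" where
  "tta_pre f E th t = tta_add (th t) (tta_state f E th (t - 1))"

definition S' :: "('v::real_vector \<Rightarrow> real) \<Rightarrow> nat \<Rightarrow> (nat \<Rightarrow> 'v) \<Rightarrow> nat \<Rightarrow> nat" where
  "S' f E th t = fst (tta_pre f E th t)"

definition thetaS' :: "('v::real_vector \<Rightarrow> real) \<Rightarrow> nat \<Rightarrow> (nat \<Rightarrow> 'v) \<Rightarrow> nat \<Rightarrow> 'v" where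
  "thetaS' f E th t = fst (snd (snd (tta_pre f E th t)))"

definition thetaL' :: "('v::real_vector \<Rightarrow> real) \<Rightarrow> nat \<Rightarrow> (nat \<Rightarrow> 'v) \<Rightarrow> nat \<Rightarrow> 'v" where
  "thetaL' f E th t = snd (snd (snd (tta_pre f E th t)))"

definition switch_point :: "('v::real_vector \<Rightarrow> real) \<Rightarrow> nat \<Rightarrow> (nat \<Rightarrow> 'v) \<Rightarrow> nat \<Rightarrow> bool" where
  "switch_point f E th n \<longleftrightarrow> 1 \<le> n \<and> E dvd n \<and> f (thetaS' f E th n) \<le> f (thetaL' f E th n)"

definition switch_count :: "('v::real_vector \<Rightarrow> real) \<Rightarrow> nat \<Rightarrow> (nat \<Rightarrow> 'v) \<Rightarrow> nat \<Rightarrow> nat" where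
  "switch_count f E th n = card {m \<in> {1..n}. switch_point f E th m}"

definition switch_exists :: "('v::real_vector \<Rightarrow> real) \<Rightarrow> nat \<Rightarrow> (nat \<Rightarrow> 'v) \<Rightarrow> nat \<Rightarrow> bool" where
  "switch_exists f E th N \<longleftrightarrow> (\<exists>n. switch_point f E th n \<and> switch_count f E th n = N)"

definition Q :: "('v::real_vector \<Rightarrow> real) \<Rightarrow> nat \<Rightarrow> (nat \<Rightarrow> 'v) \<Rightarrow> nat \<Rightarrow> nat" where
  "Q f E th N = (LEAST n. switch_point f E th n \<and> switch_count f E th n = N)"

definition F :: "('v::real_vector \<Rightarrow> real) \<Rightarrow> nat \<Rightarrow> (nat \<Rightarrow> 'v) \<Rightarrow> nat \<Rightarrow> real" where
  "F f E th N = f (thetaS' f E th (Q f E th N))"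

end

theory Submission
  imports Defs
begin

lemma cnt0: "switch_count f E th 0 = 0"
  by (simp add: switch_count_def)

lemma cntSuc: "switch_count f E th (Suc n) =
   switch_count f E th n + (if switch_point f E th (Suc n) then 1 else 0)"
proof -
  have "{m \<in> {1..Suc n}. switch_point f E th m} =
        {m \<in> {1..n}. switch_point f E th m} \<union> (if switch_point f E th (Suc n) then {Suc n} else {})"
    by (auto simp: le_Suc_eq)
  then show ?thesis unfolding switch_count_def by (simp add: card_insert_if)
qed

lemma cnt_mono: "a \<le> b \<Longrightarrow> switch_count f E th a \<le> switch_count f E th b"
  by (induction b rule: dec_induct) (auto simp: cntSuc)

lemma cnt_sp_pos: "switch_point f E th b \<Longrightarrow> a < b \<Longrightarrow> switch_count f E th a < switch_count f E th b"
proof -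
  assume sp: "switch_point f E th b" and ab: "a < b"
  then obtain c where c: "b = Suc c" "a \<le> c" by (cases b) auto
  show ?thesis using cnt_mono[OF c(2), of f E th] sp c by (simp add: cntSuc)
qed

lemma cnt_exists: "1 \<le> N \<Longrightarrow> N \<le> switch_count f E th n \<Longrightarrow>
   \<exists>m\<le>n. switch_point f E th m \<and> switch_count f E th m = N"
proof (induction n)
  case 0 then show ?case by (simp add: cnt0)
next
  case (Suc n)
  show ?case
  proof (cases "N \<le> switch_count f E th n")
    case True then show ?thesis using Suc by (meson le_Suc_eq)
  next
    case False
    then show ?thesis using Suc.prems by (auto simp: cntSuc split: if_splits intro!: exI[of _ "Suc n"])
  qed
qed

lemma cnt_unique: "switch_point f E th a \<Longrightarrow> switch_point f E th b \<Longrightarrow>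
  switch_count f E th a = switch_count f E th b \<Longrightarrow> a = b"
  by (metis cnt_sp_pos less_irrefl linorder_neqE_nat)

lemma Q_char: "switch_point f E th m \<Longrightarrow> switch_count f E th m = N \<Longrightarrow> Q f E th N = m"
  unfolding Q_def
  by (rule Least_equality) (auto dest: cnt_unique)

lemma state_Suc: "tta_state f E th (Suc t) =
  (if switch_point f E th (Suc t) then (case tta_pre f E th (Suc t) of (S, L, aS, aL) \<Rightarrow> (0, S, aS, aS))
   else tta_pre f E th (Suc t))"
  by (simp add: switch_point_def tta_pre_def thetaS'_def thetaL'_def split: prod.splits)


definition Inv :: "'v::real_vector \<Rightarrow> nat \<Rightarrow> 'v tta_state \<Rightarrow> bool" where
  "Inv a0 SN st = (case st of (S, L, aS, aL) \<Rightarrow>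
     L = SN + S \<and> real L *\<^sub>R aL = real SN *\<^sub>R a0 + real S *\<^sub>R aS)"

lemma upd_eq: "real (Suc n) *\<^sub>R (a + (x - a) /\<^sub>R real (Suc n)) = real n *\<^sub>R a + (x::'v::real_vector)"
proof -
  have "real (Suc n) *\<^sub>R (a + (x - a) /\<^sub>R real (Suc n)) = real (Suc n) *\<^sub>R a + (x - a)"
    by (simp add: scaleR_right_distrib)
  also have "\<dots> = real n *\<^sub>R a + x" by (simp add: algebra_simps)
  finally show ?thesis .
qed

lemma Inv_add: "Inv a0 SN st \<Longrightarrow> Inv a0 SN (tta_add x st)"
proof (cases st)
  case (fields S L aS aL)
  assume "Inv a0 SN st"
  then have h: "L = SN + S" "real L *\<^sub>R aL = real SN *\<^sub>R a0 + real S *\<^sub>R aS"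
    using fields by (auto simp: Inv_def)
  have e1: "real (Suc L) *\<^sub>R (aL + (x - aL) /\<^sub>R real (Suc L)) = real L *\<^sub>R aL + x" by (rule upd_eq)
  have e2: "real (Suc S) *\<^sub>R (aS + (x - aS) /\<^sub>R real (Suc S)) = real S *\<^sub>R aS + x" by (rule upd_eq)
  show ?thesis using fields h e1 e2 by (simp add: Inv_def)
qed

theorem mainTheorem5:
  fixes f :: "real ^ 'd \<Rightarrow> real" and \<theta> :: "nat \<Rightarrow> real ^ 'd" and E N :: nat
  assumes "convex_on UNIV f"
    and "E \<ge> 1"
    and "N \<ge> 1"
    and "switch_exists f E \<theta> (N + 1)"
  shows "F f E \<theta> (N + 1) \<le> F f E \<theta> N"
proof -
  obtain n where n: "switch_point f E \<theta> n" "switch_count f E \<theta> n = N + 1"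
    using assms(4) by (auto simp: switch_exists_def)
  obtain m where m: "m \<le> n" "switch_point f E \<theta> m" "switch_count f E \<theta> m = N"
    using cnt_exists[of N f E \<theta> n] assms(3) n by auto
  have mn: "m < n" using m n by (metis le_neq_implies_less n_not_Suc_n Suc_eq_plus1)
  have Qm: "Q f E \<theta> N = m" using Q_char m by metis
  have Qn: "Q f E \<theta> (N+1) = n" using Q_char n by metis
  obtain m' where m': "m = Suc m'" using m(2) by (cases m) (auto simp: switch_point_def)
  obtain SN Lm a0 aLm where pm: "tta_pre f E \<theta> m = (SN, Lm, a0, aLm)" by (cases "tta_pre f E \<theta> m")
  have SN: "SN \<ge> 1" using pm m' by (cases "tta_state f E \<theta> m'") (auto simp: tta_pre_def)
  have sm: "tta_state f E \<theta> m = (0, SN, a0, a0)"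
    using state_Suc[of f E \<theta> m'] m(2) m' pm by simp
  have inv: "Inv a0 SN (tta_state f E \<theta> t)" if "m \<le> t" "t < n" for t
    using that
  proof (induction t rule: dec_induct)
    case base then show ?case using sm by (simp add: Inv_def)
  next
    case (step t)
    have nsp: "\<not> switch_point f E \<theta> (Suc t)"
    proof
      assume sp: "switch_point f E \<theta> (Suc t)"
      have "switch_count f E \<theta> m < switch_count f E \<theta> (Suc t)"
        using cnt_sp_pos[OF sp] step by simp
      moreover have "switch_count f E \<theta> (Suc t) < switch_count f E \<theta> n"
        using cnt_sp_pos[OF n(1)] step by simp
      ultimately show False using m n by simp
    qed
    then have "tta_state f E \<theta> (Suc t) = tta_add (\<theta> (Suc t)) (tta_state f E \<theta> t)"
      using state_Suc[of f E \<theta> t] by (simp add: tta_pre_def)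
    then show ?case using Inv_add step by simp
  qed
  obtain n' where n': "n = Suc n'" using mn by (cases n) auto
  have invn: "Inv a0 SN (tta_pre f E \<theta> n)"
    using inv[of n'] mn n' Inv_add by (simp add: tta_pre_def)
  obtain S L aS aL where pn: "tta_pre f E \<theta> n = (S, L, aS, aL)" by (cases "tta_pre f E \<theta> n")
  have S: "S \<ge> 1" using pn n' by (cases "tta_state f E \<theta> n'") (auto simp: tta_pre_def)
  have h: "L = SN + S" "real L *\<^sub>R aL = real SN *\<^sub>R a0 + real S *\<^sub>R aS"
    using invn pn by (auto simp: Inv_def)
  have fle: "f aS \<le> f aL" using n(1) pn by (simp add: switch_point_def thetaS'_def thetaL'_def)
  define t where "t = real S / real L"
  have Lpos: "real L > 0" using h S by simp
  have t01: "0 \<le> t" "t \<le> 1" using h Lpos by (auto simp: t_def)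
  have omt: "1 - t = real SN / real L" using h Lpos by (simp add: t_def field_simps)
  have aL: "aL = (1 - t) *\<^sub>R a0 + t *\<^sub>R aS"
  proof -
    have "aL = (1 / real L) *\<^sub>R (real L *\<^sub>R aL)" using Lpos by simp
    also have "\<dots> = (1 - t) *\<^sub>R a0 + t *\<^sub>R aS"
      unfolding h(2) omt t_def by (simp add: scaleR_right_distrib)
        (metis omt t_def)
    finally show ?thesis .
  qed
  have conv: "f aL \<le> (1 - t) * f a0 + t * f aS"
    unfolding aL using convex_onD[OF assms(1) t01] by simp
  have pos: "1 - t > 0" using omt SN Lpos by simp
  have "(1 - t) * f aS \<le> (1 - t) * f a0" using conv fle by (simp add: algebra_simps)
  then have "f aS \<le> f a0" using pos by simp
  moreover have "F f E \<theta> (N+1) = f aS" using Qn pn by (simp add: F_def thetaS'_def)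
  moreover have "F f E \<theta> N = f a0" using Qm pm by (simp add: F_def thetaS'_def)
  ultimately show ?thesis by simp
qed

end
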